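(* Let a group $G$ act on a weighted simplicial complex $\Omega$ on $[n]$, let $\mathcal H_0,\ldots,\mathcal H_n$ be finite-dimensional Hilbert spaces with $\mathcal H_i=\mathcal H_j$ whenever $i,j$ lie in the same $G$-orbit, and $\mathcal V=\mathcal B(\mathcal H_0)\otimes\cdots\otimes\mathcal B(\mathcal H_n)$. Assume that ${\rm rank}_{(\Omega,G)}(\xi)<\infty$ for every $G$-invariant $\xi\in\mathcal V$. Then every positive semidefinite $G$-invariant $\sigma\in\mathcal V$ satisfies ${\rm puri\text{-}rank}_{(\Omega,G)}(\sigma)<\infty$.
   Context: $[n]=\{0,\ldots,n\}$. A weighted simplicial complex (wsc) on $[n]$ is a function $\Omega\colon\mathcal P([n])\to\mathbb N=\{0,1,\ldots\}$ such that $S_1\subseteq S_2$ implies $\Omega(S_1)\mid\Omega(S_2)$; simplices are sets with $\Omega(S)\neq0$, every singleton is assumed to be a simplex, facets are inclusion-maximal simplices, $\mathcal F$ is the set of facets. $\widetilde{\mathcal F}$ is the multiset containing each facet $F$ exactly $\Omega(F)$ times, with collapse map $c$; $\widetilde{\mathcal F}_i$ consists of the copies of facets containing $i$. A group action of $G$ on $\Omega$ is an action on $[n]$ with $\Omega(gS)=\Omega(S)$, together with an action on $\widetilde{\mathcal F}$ with $c(gx)=gc(x)$. $G$ acts on $\mathcal V$ (and on analogous tensor products) by permuting tensor factors according to its action on $[n]$. $\mathcal V\subseteq\mathcal B(\mathcal H_0\otimes\cdots\otimes\mathcal H_n)$, which defines positive semidefiniteness. For $\beta\colon\widetilde{\mathcal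 F}_i\to\mathcal I$, ${}^g\beta\colon\widetilde{\mathcal F}_{gi}\to\mathcal I$ is $x\mapsto\beta(g^{-1}x)$; $\alpha_{\mid i}$ is restriction to $\widetilde{\mathcal F}_i$. For a tensor product $\mathcal W=\mathcal W_0\otimes\cdots\otimes\mathcal W_n$ of vector spaces (equal along orbits), an $(\Omega,G)$-decomposition of $w\in\mathcal W$ is a finite set $\mathcal I$ and local vectors $w^{[i]}_\beta\in\mathcal W_i$ ($\beta\in\mathcal I^{\widetilde{\mathcal F}_i}$) with $w=\sum_{\alpha\in\mathcal I^{\widetilde{\mathcal F}}}w^{[0]}_{\alpha_{\mid0}}\otimes\cdots\otimes w^{[n]}_{\alpha_{\mid n}}$ and $w^{[i]}_\beta=w^{[gi]}_{{}^g\beta}$ for all $i,g,\beta$; ${\rm rank}_{(\Omega,G)}(w)$ is the minimal $|\mathcal I|$ ($\infty$ if none). An $(\Omega,G)$-purification of $\sigma\in\mathcal V$ is an element $\xi\in\mathcal B(\mathcal H_0,\mathcal H_0')\otimes\cdots\otimes\mathcal B(\mathcal H_n,\mathcal H_n')$, for some Hilbert spaces $\mathcal H_i'$, with $\sigma=\xi^*\xi$ and ${\rm rank}_{(\Omega,G)}(\xi)<\infty$; ${\rm puri\text{-}rank}_{(\Omega,G)}(\sigma)$ is the minimum of ${\rm rank}_{(\Omega,G)}(\xi)$ over all $(\Omega,G)$-purifications $\xi$ of $\sigma$ ($\infty$ if none). *)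

theory Defs
  imports "HOL-Algebra.Group_Action" "HOL-Library.FuncSet" "HOL-Library.Complex_Order"
    "HOL-Library.Extended_Nat"
begin

(* Vertex set [n] = {0,...,n} is {..n}. *)

definition wsc :: "nat \<Rightarrow> (nat set \<Rightarrow> nat) \<Rightarrow> bool" where
  "wsc n \<Omega> \<longleftrightarrow>
     (\<forall>S1 S2. S1 \<subseteq> S2 \<and> S2 \<subseteq> {..n} \<longrightarrow> \<Omega> S1 dvd \<Omega> S2) \<and>
     (\<forall>i\<le>n. \<Omega> {i} \<noteq> 0)"

definition simplex :: "nat \<Rightarrow> (nat set \<Rightarrow> nat) \<Rightarrow> nat set \<Rightarrow> bool" where
  "simplex n \<Omega> S \<longleftrightarrow> S \<subseteq> {..n} \<and> \<Omega> S \<noteq> 0"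

definition facets :: "nat \<Rightarrow> (nat set \<Rightarrow> nat) \<Rightarrow> nat set set" where
  "facets n \<Omega> = {F. simplex n \<Omega> F \<and> (\<forall>S. simplex n \<Omega> S \<and> F \<subseteq> S \<longrightarrow> S = F)}"

text \<open>The multiset of facets: each facet F appears Omega(F) times, as the copies (F,k), k < Omega(F).
  The collapse map c is fst.\<close>
definition facets_multi :: "nat \<Rightarrow> (nat set \<Rightarrow> nat) \<Rightarrow> (nat set \<times> nat) set" where
  "facets_multi n \<Omega> = {(F, k). F \<in> facets n \<Omega> \<and> k < \<Omega> F}"

definition facets_multi_at :: "nat \<Rightarrow> (nat set \<Rightarrow> nat) \<Rightarrow> nat \<Rightarrow> (nat set \<times> nat) set" where
  "facets_multi_at n \<Omega> i = {x \<in> facets_multi n \<Omega>. i \<in> fst x}"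

definition wsc_action ::
  "nat \<Rightarrow> (nat set \<Rightarrow> nat) \<Rightarrow> ('g, 'b) monoid_scheme \<Rightarrow> ('g \<Rightarrow> nat \<Rightarrow> nat)
     \<Rightarrow> ('g \<Rightarrow> nat set \<times> nat \<Rightarrow> nat set \<times> nat) \<Rightarrow> bool" where
  "wsc_action n \<Omega> G \<phi> \<psi> \<longleftrightarrow>
     group_action G {..n} \<phi> \<and>
     (\<forall>g\<in>carrier G. \<forall>S. S \<subseteq> {..n} \<longrightarrow> \<Omega> (\<phi> g ` S) = \<Omega> S) \<and>
     group_action G (facets_multi n \<Omega>) \<psi> \<and>
     (\<forall>g\<in>carrier G. \<forall>x\<in>facets_multi n \<Omega>. fst (\<psi> g x) = \<phi> g ` fst x)"

text \<open>Hilbert spaces H_i = C^(d i). Index tuples (basis of the tensor product) with dimensions d.\<close>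
definition tuples :: "nat \<Rightarrow> (nat \<Rightarrow> nat) \<Rightarrow> (nat \<Rightarrow> nat) set" where
  "tuples n d = PiE {..n} (\<lambda>k. {..<d k})"

definition orbit_const :: "('g, 'b) monoid_scheme \<Rightarrow> ('g \<Rightarrow> nat \<Rightarrow> nat) \<Rightarrow> nat \<Rightarrow> (nat \<Rightarrow> nat) \<Rightarrow> bool" where
  "orbit_const G \<phi> n d \<longleftrightarrow> (\<forall>g\<in>carrier G. \<forall>i\<le>n. d (\<phi> g i) = d i)"

text \<open>Elements of B(C^q0,C^p0) (x) ... (x) B(C^qn,C^pn) are represented by their matrix entries
  w a b, with row tuple a in tuples n p and column tuple b in tuples n q (values elsewhere irrelevant).
  The group acts by permuting tensor factors: the factor at position k moves to position g k.\<close>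
definition perm_tuple :: "nat \<Rightarrow> ('g \<Rightarrow> nat \<Rightarrow> nat) \<Rightarrow> 'g \<Rightarrow> (nat \<Rightarrow> nat) \<Rightarrow> (nat \<Rightarrow> nat)" where
  "perm_tuple n \<phi> g a = restrict (\<lambda>k. a (\<phi> g k)) {..n}"

definition G_invariant ::
  "nat \<Rightarrow> ('g, 'b) monoid_scheme \<Rightarrow> ('g \<Rightarrow> nat \<Rightarrow> nat) \<Rightarrow> (nat \<Rightarrow> nat) \<Rightarrow> (nat \<Rightarrow> nat)
     \<Rightarrow> ((nat \<Rightarrow> nat) \<Rightarrow> (nat \<Rightarrow> nat) \<Rightarrow> complex) \<Rightarrow> bool" where
  "G_invariant n G \<phi> p q w \<longleftrightarrow>
     (\<forall>g\<in>carrier G. \<forall>a\<in>tuples n p. \<forall>b\<in>tuples n q.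
        w (perm_tuple n \<phi> g a) (perm_tuple n \<phi> g b) = w a b)"

definition psd :: "nat \<Rightarrow> (nat \<Rightarrow> nat) \<Rightarrow> ((nat \<Rightarrow> nat) \<Rightarrow> (nat \<Rightarrow> nat) \<Rightarrow> complex) \<Rightarrow> bool" where
  "psd n d \<sigma> \<longleftrightarrow> (\<forall>v :: (nat \<Rightarrow> nat) \<Rightarrow> complex.
      0 \<le> (\<Sum>a\<in>tuples n d. \<Sum>b\<in>tuples n d. cnj (v a) * \<sigma> a b * v b))"

text \<open>(Omega,G)-decomposition with index set I = {..<r} of w in W_0 (x) ... (x) W_n,
  W_i = B(C^(q i), C^(p i)) (p i x q i matrices). loc i beta is the local matrix w^[i]_beta,
  for beta : F~_i -> I (extensional functions).\<close>
definition is_decomp ::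
  "nat \<Rightarrow> (nat set \<Rightarrow> nat) \<Rightarrow> ('g, 'b) monoid_scheme \<Rightarrow> ('g \<Rightarrow> nat \<Rightarrow> nat)
     \<Rightarrow> ('g \<Rightarrow> nat set \<times> nat \<Rightarrow> nat set \<times> nat) \<Rightarrow> (nat \<Rightarrow> nat) \<Rightarrow> (nat \<Rightarrow> nat) \<Rightarrow> nat
     \<Rightarrow> (nat \<Rightarrow> (nat set \<times> nat \<Rightarrow> nat) \<Rightarrow> nat \<Rightarrow> nat \<Rightarrow> complex)
     \<Rightarrow> ((nat \<Rightarrow> nat) \<Rightarrow> (nat \<Rightarrow> nat) \<Rightarrow> complex) \<Rightarrow> bool" where
  "is_decomp n \<Omega> G \<phi> \<psi> p q r loc w \<longleftrightarrow>
     (\<forall>i\<le>n. \<forall>\<beta>\<in>facets_multi_at n \<Omega> i \<rightarrow>\<^sub>E {..<r}. \<forall>x y.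
        \<not> (x < p i \<and> y < q i) \<longrightarrow> loc i \<beta> x y = 0) \<and>
     (\<forall>a\<in>tuples n p. \<forall>b\<in>tuples n q.
        w a b = (\<Sum>\<alpha>\<in>facets_multi n \<Omega> \<rightarrow>\<^sub>E {..<r}.
                   \<Prod>i\<le>n. loc i (restrict \<alpha> (facets_multi_at n \<Omega> i)) (a i) (b i))) \<and>
     (\<forall>g\<in>carrier G. \<forall>i\<le>n. \<forall>\<beta>\<in>facets_multi_at n \<Omega> i \<rightarrow>\<^sub>E {..<r}.
        loc i \<beta> = loc (\<phi> g i)
          (restrict (\<lambda>x. \<beta> (\<psi> (inv\<^bsub>G\<^esub> g) x)) (facets_multi_at n \<Omega> (\<phi> g i))))"

definition has_decomp where
  "has_decomp n \<Omega> G \<phi> \<psi> p q r w \<longleftrightarrow> (\<exists>loc. is_decomp n \<Omega> G \<phi> \<psi> p q r loc w)"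

definition omega_rank ::
  "nat \<Rightarrow> (nat set \<Rightarrow> nat) \<Rightarrow> ('g, 'b) monoid_scheme \<Rightarrow> ('g \<Rightarrow> nat \<Rightarrow> nat)
     \<Rightarrow> ('g \<Rightarrow> nat set \<times> nat \<Rightarrow> nat set \<times> nat) \<Rightarrow> (nat \<Rightarrow> nat) \<Rightarrow> (nat \<Rightarrow> nat)
     \<Rightarrow> ((nat \<Rightarrow> nat) \<Rightarrow> (nat \<Rightarrow> nat) \<Rightarrow> complex) \<Rightarrow> enat" where
  "omega_rank n \<Omega> G \<phi> \<psi> p q w = (INF r\<in>{r. has_decomp n \<Omega> G \<phi> \<psi> p q r w}. enat r)"

definition adj_mult ::
  "nat \<Rightarrow> (nat \<Rightarrow> nat) \<Rightarrow> ((nat \<Rightarrow> nat) \<Rightarrow> (nat \<Rightarrow> nat) \<Rightarrow> complex)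
     \<Rightarrow> ((nat \<Rightarrow> nat) \<Rightarrow> (nat \<Rightarrow> nat) \<Rightarrow> complex)" where
  "adj_mult n e \<xi> = (\<lambda>a b. \<Sum>c\<in>tuples n e. cnj (\<xi> c a) * \<xi> c b)"

text \<open>(Omega,G)-purification of sigma: xi with target spaces H'_i = C^(e i) (equal along orbits,
  so that the (Omega,G)-decomposition makes sense), sigma = xi^* xi, and finite rank.\<close>
definition is_purification where
  "is_purification n \<Omega> G \<phi> \<psi> d \<sigma> e \<xi> \<longleftrightarrow>
     orbit_const G \<phi> n e \<and>
     (\<forall>a\<in>tuples n d. \<forall>b\<in>tuples n d. \<sigma> a b = adj_mult n e \<xi> a b) \<and>
     omega_rank n \<Omega> G \<phi> \<psi> e d \<xi> < \<infinity>"

definition puri_rank ::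
  "nat \<Rightarrow> (nat set \<Rightarrow> nat) \<Rightarrow> ('g, 'b) monoid_scheme \<Rightarrow> ('g \<Rightarrow> nat \<Rightarrow> nat)
     \<Rightarrow> ('g \<Rightarrow> nat set \<times> nat \<Rightarrow> nat set \<times> nat) \<Rightarrow> (nat \<Rightarrow> nat)
     \<Rightarrow> ((nat \<Rightarrow> nat) \<Rightarrow> (nat \<Rightarrow> nat) \<Rightarrow> complex) \<Rightarrow> enat" where
  "puri_rank n \<Omega> G \<phi> \<psi> d \<sigma> =
     (INF (e, \<xi>)\<in>{(e, \<xi>). is_purification n \<Omega> G \<phi> \<psi> d \<sigma> e \<xi>}. omega_rank n \<Omega> G \<phi> \<psi> e d \<xi>)"

end

theory Submission
  imports Defs "HOL-Computational_Algebra.Fundamental_Theorem_Algebra" "HOL-Library.Function_Algebras"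
begin


definition mmul :: "'t set \<Rightarrow> ('t \<Rightarrow> 't \<Rightarrow> complex) \<Rightarrow> ('t \<Rightarrow> 't \<Rightarrow> complex) \<Rightarrow> ('t \<Rightarrow> 't \<Rightarrow> complex)" where
  "mmul T M N = (\<lambda>a b. if a \<in> T \<and> b \<in> T then \<Sum>c\<in>T. M a c * N c b else 0)"

definition mone :: "'t set \<Rightarrow> ('t \<Rightarrow> 't \<Rightarrow> complex)" where
  "mone T = (\<lambda>a b. if a \<in> T \<and> b = a then 1 else 0)"

primrec mpow :: "'t set \<Rightarrow> ('t \<Rightarrow> 't \<Rightarrow> complex) \<Rightarrow> nat \<Rightarrow> ('t \<Rightarrow> 't \<Rightarrow> complex)" where
  "mpow T A 0 = mone T"
| "mpow T A (Suc k) = mmul T A (mpow T A k)"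

definition msupp :: "'t set \<Rightarrow> ('t \<Rightarrow> 't \<Rightarrow> complex) \<Rightarrow> bool" where
  "msupp T M \<longleftrightarrow> (\<forall>a b. \<not> (a \<in> T \<and> b \<in> T) \<longrightarrow> M a b = 0)"

definition evalm :: "'t set \<Rightarrow> ('t \<Rightarrow> 't \<Rightarrow> complex) \<Rightarrow> complex poly \<Rightarrow> ('t \<Rightarrow> 't \<Rightarrow> complex)" where
  "evalm T A p = (\<lambda>a b. \<Sum>k\<le>degree p. coeff p k * mpow T A k a b)"

lemma msupp_mmul: "msupp T (mmul T M N)"
  by (simp add: msupp_def mmul_def)

lemma msupp_mone: "msupp T (mone T)"
  by (simp add: msupp_def mone_def)

lemma msupp_mpow: "msupp T (mpow T A k)"
  by (cases k) (simp_all add: msupp_mmul msupp_mone)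

lemma msupp_evalm: "msupp T (evalm T A p)"
  using msupp_mpow[of T A] by (simp add: msupp_def evalm_def)

lemma mmul_assoc:
  assumes "finite T"
  shows "mmul T (mmul T A B) C = mmul T A (mmul T B C)"
proof (intro ext)
  fix a b
  show "mmul T (mmul T A B) C a b = mmul T A (mmul T B C) a b"
  proof (cases "a \<in> T \<and> b \<in> T")
    case True
    have "mmul T (mmul T A B) C a b = (\<Sum>c\<in>T. (\<Sum>e\<in>T. A a e * B e c) * C c b)"
      using True by (simp add: mmul_def)
    also have "\<dots> = (\<Sum>c\<in>T. \<Sum>e\<in>T. A a e * B e c * C c b)"
      by (simp add: sum_distrib_right)
    also have "\<dots> = (\<Sum>e\<in>T. \<Sum>c\<in>T. A a e * B e c * C c b)"
      by (rule sum.swap)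
    also have "\<dots> = (\<Sum>e\<in>T. A a e * (\<Sum>c\<in>T. B e c * C c b))"
      by (simp add: sum_distrib_left mult.assoc)
    also have "\<dots> = mmul T A (mmul T B C) a b"
      using True by (simp add: mmul_def)
    finally show ?thesis .
  qed (auto simp: mmul_def)
qed

lemma mmul_one_left:
  assumes "finite T" "msupp T M"
  shows "mmul T (mone T) M = M"
proof (intro ext)
  fix a b
  show "mmul T (mone T) M a b = M a b"
  proof (cases "a \<in> T \<and> b \<in> T")
    case True
    then have "mmul T (mone T) M a b = (\<Sum>c\<in>T. if c = a then M c b else 0)"
      by (auto simp: mmul_def mone_def intro!: sum.cong)
    also have "\<dots> = M a b" using True assms(1) by (simp add: sum.delta')
    finally show ?thesis .
  qed (use assms(2) in \<open>auto simp: mmul_def msupp_def\<close>)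
qed

lemma mmul_one_right:
  assumes "finite T" "msupp T M"
  shows "mmul T M (mone T) = M"
proof (intro ext)
  fix a b
  show "mmul T M (mone T) a b = M a b"
  proof (cases "a \<in> T \<and> b \<in> T")
    case True
    then have "mmul T M (mone T) a b = (\<Sum>c\<in>T. if c = b then M a c else 0)"
      by (auto simp: mmul_def mone_def intro!: sum.cong)
    also have "\<dots> = M a b" using True assms(1) by (simp add: sum.delta')
    finally show ?thesis .
  qed (use assms(2) in \<open>auto simp: mmul_def msupp_def\<close>)
qed

lemma mmul_lin_left:
  "mmul T (\<lambda>x y. c * M x y + N x y) Q = (\<lambda>x y. c * mmul T M Q x y + mmul T N Q x y)"
  by (auto simp: mmul_def fun_eq_iff sum.distrib sum_distrib_left algebra_simps)

lemma mmul_zero_left: "mmul T (\<lambda>x y. 0) Q = (\<lambda>x y. 0)"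
  by (auto simp: mmul_def fun_eq_iff)

lemma mpow_Suc_right:
  assumes "finite T" "msupp T A"
  shows "mpow T A (Suc k) = mmul T (mpow T A k) A"
proof (induction k)
  case 0
  then show ?case using assms by (simp add: mmul_one_left mmul_one_right)
next
  case (Suc k)
  have "mpow T A (Suc (Suc k)) = mmul T A (mmul T (mpow T A k) A)"
    using Suc by simp
  also have "\<dots> = mmul T (mpow T A (Suc k)) A"
    using assms by (simp add: mmul_assoc)
  finally show ?case .
qed

lemma evalm_bound:
  assumes "degree p \<le> m"
  shows "evalm T A p a b = (\<Sum>k\<le>m. coeff p k * mpow T A k a b)"
  unfolding evalm_def
  by (rule sum.mono_neutral_left) (use assms in \<open>auto intro: coeff_eq_0 simp: not_le\<close>)

lemma evalm_add: "evalm T A (p + q) = (\<lambda>a b. evalm T A p a b + evalm T A q a b)"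
proof (intro ext)
  fix a b
  let ?m = "max (degree p) (degree q)"
  have "evalm T A (p + q) a b = (\<Sum>k\<le>?m. coeff (p+q) k * mpow T A k a b)"
    by (rule evalm_bound) (simp add: degree_add_le)
  also have "\<dots> = (\<Sum>k\<le>?m. coeff p k * mpow T A k a b) + (\<Sum>k\<le>?m. coeff q k * mpow T A k a b)"
    by (simp add: algebra_simps sum.distrib)
  also have "\<dots> = evalm T A p a b + evalm T A q a b"
    using evalm_bound[of p ?m T A a b] evalm_bound[of q ?m T A a b] by simp
  finally show "evalm T A (p + q) a b = evalm T A p a b + evalm T A q a b" .
qed

lemma evalm_smult: "evalm T A (smult c p) = (\<lambda>a b. c * evalm T A p a b)"
proof (intro ext)
  fix a b
  have "evalm T A (smult c p) a b = (\<Sum>k\<le>degree p. coeff (smult c p) k * mpow T A k a b)"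
    by (rule evalm_bound) (simp add: degree_smult_le)
  then show "evalm T A (smult c p) a b = c * evalm T A p a b"
    by (simp add: evalm_def sum_distrib_left mult.assoc)
qed

lemma evalm_const: "evalm T A [:c:] = (\<lambda>a b. c * mone T a b)"
  by (simp add: evalm_def)

lemma evalm_zero: "evalm T A 0 = (\<lambda>a b. 0)"
  by (simp add: evalm_def)

lemma evalm_shift: "evalm T A (pCons 0 p) = mmul T A (evalm T A p)"
proof (intro ext)
  fix a b
  have "evalm T A (pCons 0 p) a b = (\<Sum>k\<le>Suc (degree p). coeff (pCons 0 p) k * mpow T A k a b)"
    by (rule evalm_bound) (simp add: degree_pCons_le)
  also have "\<dots> = (\<Sum>k\<le>degree p. coeff p k * mpow T A (Suc k) a b)"
    by (subst sum.atMost_Suc_shift) (simp del: mpow.simps)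
  also have "\<dots> = mmul T A (evalm T A p) a b"
    by (auto simp: mmul_def evalm_def sum_distrib_left sum_distrib_right algebra_simps intro: sum.swap)
  finally show "evalm T A (pCons 0 p) a b = mmul T A (evalm T A p) a b" .
qed

lemma evalm_pCons: "evalm T A (pCons c p) = (\<lambda>x y. c * mone T x y + mmul T A (evalm T A p) x y)"
proof -
  have "pCons c p = [:c:] + pCons 0 p" by simp
  then show ?thesis by (simp only: evalm_add evalm_const evalm_shift)
qed

lemma evalm_mult:
  assumes "finite T"
  shows "evalm T A (p * q) = mmul T (evalm T A p) (evalm T A q)"
proof (induction p rule: pCons_induct)
  case 0
  then show ?case by (simp add: evalm_zero mmul_zero_left)
next
  case (pCons c p)
  have "evalm T A (pCons c p * q) = evalm T A (smult c q + pCons 0 (p * q))"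
    by simp
  also have "\<dots> = (\<lambda>x y. c * evalm T A q x y + mmul T A (mmul T (evalm T A p) (evalm T A q)) x y)"
    by (simp only: evalm_add evalm_smult evalm_shift pCons.IH)
  also have "\<dots> = mmul T (evalm T A (pCons c p)) (evalm T A q)"
    by (simp only: evalm_pCons mmul_lin_left mmul_one_left[OF assms msupp_evalm] mmul_assoc[OF assms])
  finally show ?case .
qed



definition mherm :: "('t \<Rightarrow> 't \<Rightarrow> complex) \<Rightarrow> bool" where
  "mherm M \<longleftrightarrow> (\<forall>a b. M a b = cnj (M b a))"

definition minv :: "'t set \<Rightarrow> ('t \<Rightarrow> 't) \<Rightarrow> ('t \<Rightarrow> 't \<Rightarrow> complex) \<Rightarrow> bool" where
  "minv T \<pi> M \<longleftrightarrow> (\<forall>a\<in>T. \<forall>b\<in>T. M (\<pi> a) (\<pi> b) = M a b)"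

definition psdT :: "'t set \<Rightarrow> ('t \<Rightarrow> 't \<Rightarrow> complex) \<Rightarrow> bool" where
  "psdT T M \<longleftrightarrow> (\<forall>v. 0 \<le> (\<Sum>a\<in>T. \<Sum>b\<in>T. cnj (v a) * M a b * v b))"

definition Hm :: "'t set \<Rightarrow> ('t \<Rightarrow> 't \<Rightarrow> complex) \<Rightarrow> complex \<Rightarrow> ('t \<Rightarrow> 't \<Rightarrow> complex)" where
  "Hm T A \<mu> = (\<lambda>x y. A x y - \<mu> * mone T x y)"

lemma mherm_mone: "mherm (mone T)"
  by (auto simp: mherm_def mone_def)

lemma mherm_mmul_comm:
  assumes "mherm M" "mherm N" "mmul T M N = mmul T N M"
  shows "mherm (mmul T M N)"
  unfolding mherm_def
proof (intro allI)
  fix a b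
  have "cnj (mmul T M N b a) = mmul T N M a b"
  proof (cases "a \<in> T \<and> b \<in> T")
    case True
    have "cnj (mmul T M N b a) = (\<Sum>c\<in>T. cnj (M b c) * cnj (N c a))"
      using True by (simp add: mmul_def)
    also have "\<dots> = (\<Sum>c\<in>T. N a c * M c b)"
      by (rule sum.cong[OF refl]) (metis assms(1,2) mherm_def mult.commute)
    also have "\<dots> = mmul T N M a b" using True by (simp add: mmul_def)
    finally show ?thesis .
  qed (auto simp: mmul_def)
  then show "mmul T M N a b = cnj (mmul T M N b a)" using assms(3) by simp
qed

lemma mherm_mpow:
  assumes "finite T" "msupp T A" "mherm A"
  shows "mherm (mpow T A k)"
proof (induction k)
  case 0 then show ?case by (simp add: mherm_mone)
next
  case (Suc k)
  have "mmul T A (mpow T A k) = mmul T (mpow T A k) A"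
    using mpow_Suc_right[OF assms(1,2), of k] by simp
  then show ?case using mherm_mmul_comm[OF assms(3) Suc] by simp
qed

lemma mherm_evalm:
  assumes "finite T" "msupp T A" "mherm A" "\<forall>k. coeff p k \<in> \<real>"
  shows "mherm (evalm T A p)"
  unfolding mherm_def evalm_def
proof (intro allI)
  fix a b
  have "cnj (\<Sum>k\<le>degree p. coeff p k * mpow T A k b a) = (\<Sum>k\<le>degree p. coeff p k * mpow T A k a b)"
  proof -
    have "cnj (\<Sum>k\<le>degree p. coeff p k * mpow T A k b a) = (\<Sum>k\<le>degree p. cnj (coeff p k) * cnj (mpow T A k b a))"
      by (simp only: cnj_sum complex_cnj_mult)
    also have "\<dots> = (\<Sum>k\<le>degree p. coeff p k * mpow T A k a b)"
    proof (rule sum.cong[OF refl])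
      fix k
      have "cnj (coeff p k) = coeff p k" using assms(4) Reals_cnj_iff by blast
      moreover have "cnj (mpow T A k b a) = mpow T A k a b"
        using mherm_mpow[OF assms(1,2,3), of k] unfolding mherm_def by metis
      ultimately show "cnj (coeff p k) * cnj (mpow T A k b a) = coeff p k * mpow T A k a b" by simp
    qed
    finally show ?thesis .
  qed
  then show "(\<Sum>k\<le>degree p. coeff p k * mpow T A k a b) = cnj (\<Sum>k\<le>degree p. coeff p k * mpow T A k b a)"
    by simp
qed

lemma minv_mmul:
  assumes "bij_betw \<pi> T T" "minv T \<pi> M" "minv T \<pi> N"
  shows "minv T \<pi> (mmul T M N)"
  unfolding minv_def
proof (intro ballI)
  fix a b assume ab: "a \<in> T" "b \<in> T"
  have pa: "\<pi> a \<in> T" "\<pi> b \<in> T" using ab assms(1) bij_betwE by blast+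
  have "mmul T M N (\<pi> a) (\<pi> b) = (\<Sum>c\<in>T. M (\<pi> a) c * N c (\<pi> b))"
    using pa by (simp add: mmul_def)
  also have "\<dots> = (\<Sum>c\<in>T. M (\<pi> a) (\<pi> c) * N (\<pi> c) (\<pi> b))"
    by (rule sum.reindex_bij_betw[OF assms(1), symmetric])
  also have "\<dots> = (\<Sum>c\<in>T. M a c * N c b)"
    using assms(2,3) ab unfolding minv_def by (auto intro!: sum.cong)
  also have "\<dots> = mmul T M N a b" using ab by (simp add: mmul_def)
  finally show "mmul T M N (\<pi> a) (\<pi> b) = mmul T M N a b" .
qed

lemma minv_mone:
  assumes "bij_betw \<pi> T T"
  shows "minv T \<pi> (mone T)"
  using assms unfolding minv_def mone_def bij_betw_def inj_on_def by auto

lemma minv_mpow: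
  assumes "bij_betw \<pi> T T" "minv T \<pi> A"
  shows "minv T \<pi> (mpow T A k)"
  by (induction k) (simp_all add: minv_mone minv_mmul assms)

lemma minv_evalm:
  assumes "bij_betw \<pi> T T" "minv T \<pi> A"
  shows "minv T \<pi> (evalm T A p)"
  using minv_mpow[OF assms] unfolding minv_def evalm_def by simp

lemma cnj_sum_norm: "(\<Sum>a\<in>T. cnj (y a) * y a) = of_real (\<Sum>a\<in>T. (cmod (y a))\<^sup>2)"
proof -
  have "(\<Sum>a\<in>T. cnj (y a) * y a) = (\<Sum>a\<in>T. (of_real ((cmod (y a))\<^sup>2) :: complex))"
    by (rule sum.cong[OF refl]) (metis complex_norm_square mult.commute)
  also have "\<dots> = of_real (\<Sum>a\<in>T. (cmod (y a))\<^sup>2)" by (rule of_real_sum[symmetric])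
  finally show ?thesis .
qed

lemma norm_sum_zero:
  fixes y :: "'t \<Rightarrow> complex"
  assumes "finite T" "(\<Sum>a\<in>T. cnj (y a) * y a) = 0" "a0 \<in> T"
  shows "y a0 = 0"
proof -
  have "(\<Sum>a\<in>T. cnj (y a) * y a) = of_real (\<Sum>a\<in>T. (cmod (y a))\<^sup>2)"
    by (rule cnj_sum_norm)
  with assms(2) have "(of_real (\<Sum>a\<in>T. (cmod (y a))\<^sup>2) :: complex) = 0" by metis
  then have "(\<Sum>a\<in>T. (cmod (y a))\<^sup>2) = 0" by (simp only: of_real_eq_0_iff)
  with assms(1,3) have "(cmod (y a0))\<^sup>2 = 0"
    by (subst (asm) sum_nonneg_eq_0_iff) auto
  then show ?thesis by simp
qed

lemma K1:
  assumes fin: "finite T" and psd: "psdT T A" and supp: "msupp T Y"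
    and eq: "mmul T (Hm T A \<mu>) Y = (\<lambda>x y. 0)" and mu: "\<not> 0 \<le> \<mu>"
  shows "Y = (\<lambda>x y. 0)"
proof (intro ext)
  fix a0 b
  show "Y a0 b = 0"
  proof (cases "a0 \<in> T \<and> b \<in> T")
    case False then show ?thesis using supp by (auto simp: msupp_def)
  next
    case True
    define y where "y = (\<lambda>a. Y a b)"
    have Ay: "(\<Sum>c\<in>T. A a c * y c) = \<mu> * y a" if a: "a \<in> T" for a
    proof -
      have "0 = (\<Sum>c\<in>T. (A a c - \<mu> * mone T a c) * y c)"
        using fun_cong[OF fun_cong[OF eq, of a], of b] a True by (simp add: mmul_def Hm_def y_def)
      also have "\<dots> = (\<Sum>c\<in>T. A a c * y c) - (\<Sum>c\<in>T. \<mu> * mone T a c * y c)"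
        by (simp add: algebra_simps sum_subtractf)
      also have "(\<Sum>c\<in>T. \<mu> * mone T a c * y c) = (\<Sum>c\<in>T. if c = a then \<mu> * y a else 0)"
        by (auto simp: mone_def intro!: sum.cong)
      also have "\<dots> = \<mu> * y a" using fin a by (simp add: sum.delta')
      finally show ?thesis by simp
    qed
    define r where "r = (\<Sum>a\<in>T. (cmod (y a))\<^sup>2)"
    have "(\<Sum>a\<in>T. \<Sum>c\<in>T. cnj (y a) * A a c * y c) = (\<Sum>a\<in>T. cnj (y a) * (\<Sum>c\<in>T. A a c * y c))"
      by (simp only: sum_distrib_left mult.assoc)
    also have "\<dots> = (\<Sum>a\<in>T. cnj (y a) * (\<mu> * y a))"
      by (rule sum.cong[OF refl]) (simp add: Ay)
    also have "\<dots> = \<mu> * (\<Sum>a\<in>T. cnj (y a) * y a)"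
      by (simp add: sum_distrib_left algebra_simps)
    also have "(\<Sum>a\<in>T. cnj (y a) * y a) = of_real r"
      unfolding r_def by (rule cnj_sum_norm)
    finally have Q: "0 \<le> \<mu> * of_real r" using psd unfolding psdT_def by metis
    have "r = 0"
    proof (rule ccontr)
      assume "r \<noteq> 0"
      moreover have "r \<ge> 0" unfolding r_def by (simp add: sum_nonneg)
      ultimately have "r > 0" by simp
      with Q have "Im \<mu> = 0" "Re \<mu> \<ge> 0"
        by (auto simp: less_eq_complex_def zero_le_mult_iff)
      then show False using mu by (simp add: less_eq_complex_def)
    qed
    then have "(\<Sum>a\<in>T. cnj (y a) * y a) = 0"
      by (simp only: cnj_sum_norm \<open>r = 0\<close>[unfolded r_def] of_real_0)
    then have "y a0 = 0" using norm_sum_zero[OF fin] True by blast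
    then show ?thesis by (simp add: y_def)
  qed
qed

lemma K2:
  assumes fin: "finite T" and herm: "mherm H"
    and eq: "mmul T H (mmul T H Y) = (\<lambda>x y. 0)"
  shows "mmul T H Y = (\<lambda>x y. 0)"
proof (intro ext)
  fix a0 b
  define Z where "Z = mmul T H Y"
  have HZ: "mmul T H Z = (\<lambda>x y. 0)" using eq by (simp add: Z_def)
  show "mmul T H Y a0 b = 0"
  proof (cases "a0 \<in> T \<and> b \<in> T")
    case False then show ?thesis by (auto simp: mmul_def)
  next
    case True
    have Zab: "Z a b = (\<Sum>c\<in>T. H a c * Y c b)" if "a \<in> T" for a
      using True that by (simp add: Z_def mmul_def)
    have hc: "cnj (H a c) = H c a" for a c using herm unfolding mherm_def by metis
    have "(\<Sum>a\<in>T. cnj (Z a b) * Z a b) = (\<Sum>a\<in>T. (\<Sum>c\<in>T. H c a * cnj (Y c b)) * Z a b)"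
      by (rule sum.cong[OF refl]) (simp only: Zab cnj_sum complex_cnj_mult hc)
    also have "\<dots> = (\<Sum>a\<in>T. \<Sum>c\<in>T. H c a * cnj (Y c b) * Z a b)"
      by (simp only: sum_distrib_right)
    also have "\<dots> = (\<Sum>c\<in>T. \<Sum>a\<in>T. H c a * cnj (Y c b) * Z a b)"
      by (rule sum.swap)
    also have "\<dots> = (\<Sum>c\<in>T. cnj (Y c b) * (\<Sum>a\<in>T. H c a * Z a b))"
      by (simp only: sum_distrib_left mult_ac)
    also have "\<dots> = (\<Sum>c\<in>T. cnj (Y c b) * mmul T H Z c b)"
      by (rule sum.cong[OF refl]) (use True in \<open>simp add: mmul_def\<close>)
    also have "\<dots> = 0" by (simp add: HZ)
    finally have "(\<Sum>a\<in>T. cnj (Z a b) * Z a b) = 0" .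
    then have "Z a0 b = 0" using norm_sum_zero[OF fin, of "\<lambda>a. Z a b" a0] True by simp
    then show ?thesis by (simp add: Z_def)
  qed
qed

lemma evalm_lin:
  assumes "finite T" "msupp T A"
  shows "evalm T A [:-\<mu>, 1:] = Hm T A \<mu>"
proof -
  have "evalm T A [:1:] = mone T" by (simp add: evalm_const)
  then show ?thesis
    using mmul_one_right[OF assms]
    by (simp add: evalm_pCons Hm_def fun_eq_iff)
qed

lemma mherm_Hm:
  assumes "mherm A" "0 \<le> \<mu>"
  shows "mherm (Hm T A \<mu>)"
proof -
  have "cnj \<mu> = \<mu>" using assms(2) by (simp add: less_eq_complex_def complex_eq_iff)
  show ?thesis unfolding mherm_def Hm_def
  proof (intro allI)
    fix a b
    have "A a b = cnj (A b a)" "mone T a b = cnj (mone T b a)"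
      using assms(1) mherm_mone[of T] unfolding mherm_def by metis+
    then show "A a b - \<mu> * mone T a b = cnj (A b a - \<mu> * mone T b a)"
      using \<open>cnj \<mu> = \<mu>\<close> by simp
  qed
qed

lemma reduce:
  assumes fin: "finite T" and supp: "msupp T A" and herm: "mherm A" and psd: "psdT T A"
  shows "f \<noteq> 0 \<Longrightarrow> evalm T A (f * r) = (\<lambda>x y. 0) \<Longrightarrow>
    \<exists>S. finite S \<and> S \<subseteq> {\<mu>. 0 \<le> \<mu>} \<and> evalm T A ((\<Prod>\<mu>\<in>S. [:-\<mu>, 1:]) * r) = (\<lambda>x y. 0)"
proof (induction "degree f" arbitrary: f r rule: less_induct)
  case less
  show ?case
  proof (cases "degree f = 0")
    case True
    then obtain c where f: "f = [:c:]" by (metis degree_eq_zeroE)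
    with less.prems have c: "c \<noteq> 0" by simp
    have "evalm T A (smult c r) = (\<lambda>x y. 0)" using less.prems f by simp
    then have "evalm T A r = (\<lambda>x y. 0)" using c by (simp add: evalm_smult fun_eq_iff)
    then show ?thesis by (intro exI[of _ "{}"]) simp
  next
    case False
    then have "\<not> constant (poly f)" by (simp add: constant_degree)
    then obtain \<mu> where "poly f \<mu> = 0" using fundamental_theorem_of_algebra by blast
    then obtain f1 where f: "f = [:-\<mu>, 1:] * f1" by (metis poly_eq_0_iff_dvd dvdE)
    with less.prems have f1: "f1 \<noteq> 0" by auto
    have "degree f = degree [:-\<mu>, 1:] + degree f1" unfolding f by (rule degree_mult_eq) (simp_all add: f1)
    then have "degree f = Suc (degree f1)" by simp
    then have dl: "degree f1 < degree f" by simp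
    have "evalm T A (f1 * ([:-\<mu>, 1:] * r)) = (\<lambda>x y. 0)"
    proof -
      have "f1 * ([:-\<mu>, 1:] * r) = f * r" unfolding f mult.assoc by (rule mult.left_commute)
      then show ?thesis using less.prems(2) by simp
    qed
    from less.hyps[OF dl f1 this] obtain S' where S': "finite S'" "S' \<subseteq> {\<mu>. 0 \<le> \<mu>}"
      "evalm T A ((\<Prod>\<mu>\<in>S'. [:-\<mu>, 1:]) * ([:-\<mu>, 1:] * r)) = (\<lambda>x y. 0)" by blast
    define W where "W = (\<Prod>\<mu>\<in>S'. [:-\<mu>, 1:]) * r"
    have HW0: "mmul T (Hm T A \<mu>) (evalm T A W) = evalm T A ([:-\<mu>, 1:] * W)"
      by (simp only: evalm_mult[OF fin] evalm_lin[OF fin supp])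
    have "[:-\<mu>, 1:] * W = (\<Prod>\<mu>\<in>S'. [:-\<mu>, 1:]) * ([:-\<mu>, 1:] * r)"
      unfolding W_def by (rule mult.left_commute)
    with HW0 S'(3) have HW: "mmul T (Hm T A \<mu>) (evalm T A W) = (\<lambda>x y. 0)" by simp
    show ?thesis
    proof (cases "0 \<le> \<mu>")
      case False
      have "evalm T A W = (\<lambda>x y. 0)" by (rule K1[OF fin psd msupp_evalm HW False])
      then show ?thesis using S' unfolding W_def by blast
    next
      case nn: True
      show ?thesis
      proof (cases "\<mu> \<in> S'")
        case True
        have pe: "(\<Prod>\<mu>\<in>S'. [:-\<mu>, 1:]) = [:-\<mu>, 1:] * (\<Prod>\<mu>\<in>S' - {\<mu>}. [:-\<mu>, 1:])"
          by (rule prod.remove[OF S'(1) True])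
        have "W = [:-\<mu>, 1:] * ((\<Prod>\<mu>\<in>S' - {\<mu>}. [:-\<mu>, 1:]) * r)"
          unfolding W_def pe mult.assoc by (rule refl)
        then have "evalm T A W = mmul T (Hm T A \<mu>) (evalm T A ((\<Prod>\<mu>\<in>S' - {\<mu>}. [:-\<mu>, 1:]) * r))"
          by (simp only: evalm_mult[OF fin] evalm_lin[OF fin supp])
        then have "evalm T A W = (\<lambda>x y. 0)"
          using K2[OF fin mherm_Hm[OF herm nn]] HW by simp
        then show ?thesis using S' unfolding W_def by blast
      next
        case False
        have pe: "(\<Prod>\<mu>\<in>insert \<mu> S'. [:-\<mu>, 1:]) = [:-\<mu>, 1:] * (\<Prod>\<mu>\<in>S'. [:-\<mu>, 1:])"
          by (rule prod.insert[OF S'(1) False])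
        have "(\<Prod>\<mu>\<in>insert \<mu> S'. [:-\<mu>, 1:]) * r = [:-\<mu>, 1:] * W"
          unfolding W_def pe mult.assoc by (rule refl)
        then have "evalm T A ((\<Prod>\<mu>\<in>insert \<mu> S'. [:-\<mu>, 1:]) * r) = (\<lambda>x y. 0)"
          using HW0 HW by simp
        then show ?thesis using S' nn by (intro exI[of _ "insert \<mu> S'"]) auto
      qed
    qed
  qed
qed



lemma sum_fun_apply: "(sum f A) x = (\<Sum>a\<in>A. f a x)"
  by (induction A rule: infinite_finite_induct) auto

lemma evalm_sum_monom:
  "evalm T A (\<Sum>k\<le>M. monom (c k) k) a b = (\<Sum>k\<le>M. c k * mpow T A k a b)"
proof -
  have co: "coeff (\<Sum>k\<le>M. monom (c k) k) i = (if i \<le> M then c i else 0)" for i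
    by (simp add: coeff_sum coeff_monom)
  have "degree (\<Sum>k\<le>M. monom (c k) k) \<le> M"
    by (rule degree_le) (simp add: co)
  then show ?thesis by (simp add: evalm_bound co)
qed

lemma coeff_sum_monom: "coeff (\<Sum>k\<le>M. monom (c k) k) i = (if i \<le> M then c i else 0)"
  by (simp add: coeff_sum coeff_monom)

lemma annih:
  fixes A :: "'t \<Rightarrow> 't \<Rightarrow> complex"
  assumes fin: "finite T"
  shows "\<exists>f. f \<noteq> 0 \<and> evalm T A f = (\<lambda>x y. 0)"
proof -
  interpret FV: vector_space "\<lambda>(c::complex) (f::('t \<times> 't) \<Rightarrow> complex) x. c * f x"
    by unfold_locales (auto simp: fun_eq_iff algebra_simps)
  define U where "U = T \<times> T"
  define M where "M = card U"
  define \<delta> where "\<delta> = (\<lambda>q::'t \<times> 't. \<lambda>x. if x = q then (1::complex) else 0)"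
  define Sb where "Sb = \<delta> ` U"
  define rp where "rp = (\<lambda>k. \<lambda>(a, b). mpow T A k a b)"
  have finU: "finite U" using fin by (simp add: U_def)
  have cardSb: "card Sb \<le> M" unfolding Sb_def M_def by (rule card_image_le[OF finU])
  have finSb: "finite Sb" unfolding Sb_def using finU by simp
  have span: "rp k \<in> FV.span Sb" for k
  proof -
    have "rp k = (\<Sum>q\<in>U. (\<lambda>x. rp k q * \<delta> q x))"
    proof (rule ext)
      fix x
      have "(\<Sum>q\<in>U. (\<lambda>x. rp k q * \<delta> q x)) x = (\<Sum>q\<in>U. rp k q * \<delta> q x)"
        by (simp add: sum_fun_apply)
      also have "\<dots> = (\<Sum>q\<in>U. if q = x then rp k x else 0)"
        by (rule sum.cong) (auto simp: \<delta>_def)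
      also have "\<dots> = (if x \<in> U then rp k x else 0)" using finU by (simp add: sum.delta)
      also have "\<dots> = rp k x"
        using msupp_mpow[of T A k] by (cases x) (auto simp: U_def rp_def msupp_def)
      finally show "rp k x = (\<Sum>q\<in>U. (\<lambda>x. rp k q * \<delta> q x)) x" by simp
    qed
    also have "\<dots> \<in> FV.span Sb"
    proof (rule FV.span_sum)
      fix q assume "q \<in> U"
      then have "\<delta> q \<in> FV.span Sb" by (intro FV.span_base) (simp add: Sb_def)
      from FV.span_scale[OF this, of "rp k q"] show "(\<lambda>x. rp k q * \<delta> q x) \<in> FV.span Sb" by simp
    qed
    finally show ?thesis .
  qed
  have "\<exists>c. (\<exists>k\<le>M. c k \<noteq> 0) \<and> (\<forall>a b. (\<Sum>k\<le>M. c k * mpow T A k a b) = 0)"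
  proof (cases "inj_on rp {..M}")
    case True
    define P where "P = rp ` {..M}"
    have finP: "finite P" unfolding P_def by simp
    have cardP: "card P = Suc M" unfolding P_def using True by (simp add: card_image)
    have "\<not> FV.independent P"
    proof
      assume "FV.independent P"
      from FV.independent_span_bound[OF finSb this] span have "card P \<le> card Sb"
        unfolding P_def by auto
      with cardP cardSb show False by simp
    qed
    then obtain u where u: "\<exists>v\<in>P. u v \<noteq> 0" "(\<Sum>v\<in>P. (\<lambda>x. u v * v x)) = 0"
      using FV.dependent_finite[OF finP] by auto
    show ?thesis
    proof (intro exI[of _ "\<lambda>k. u (rp k)"] conjI allI)
      show "\<exists>k\<le>M. u (rp k) \<noteq> 0" using u(1) unfolding P_def by auto
    next
      fix a b
      have "0 = (\<Sum>v\<in>P. (\<lambda>x. u v * v x)) (a, b)" using u(2) by simp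
      also have "\<dots> = (\<Sum>v\<in>P. u v * v (a, b))" by (simp add: sum_fun_apply)
      also have "\<dots> = (\<Sum>k\<le>M. u (rp k) * rp k (a, b))"
        unfolding P_def by (simp add: sum.reindex[OF True])
      also have "\<dots> = (\<Sum>k\<le>M. u (rp k) * mpow T A k a b)" by (simp add: rp_def)
      finally show "(\<Sum>k\<le>M. u (rp k) * mpow T A k a b) = 0" by simp
    qed
  next
    case False
    then obtain i j where ij: "i \<le> M" "j \<le> M" "i \<noteq> j" "rp i = rp j"
      unfolding inj_on_def by auto
    define c where "c = (\<lambda>k. (if k = j then 1 else 0) - (if k = i then (1::complex) else 0))"
    show ?thesis
    proof (intro exI[of _ c] conjI allI)
      show "\<exists>k\<le>M. c k \<noteq> 0" using ij by (intro exI[of _ j]) (simp add: c_def)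
    next
      fix a b
      have "(\<Sum>k\<le>M. c k * mpow T A k a b)
          = (\<Sum>k\<le>M. (if k = j then mpow T A k a b else 0)) - (\<Sum>k\<le>M. (if k = i then mpow T A k a b else 0))"
      proof -
        have "(\<Sum>k\<le>M. c k * mpow T A k a b) = (\<Sum>k\<le>M. (if k = j then mpow T A k a b else 0) - (if k = i then mpow T A k a b else 0))"
          by (rule sum.cong[OF refl]) (simp add: c_def)
        also have "\<dots> = (\<Sum>k\<le>M. (if k = j then mpow T A k a b else 0)) - (\<Sum>k\<le>M. (if k = i then mpow T A k a b else 0))"
          by (rule sum_subtractf)
        finally show ?thesis .
      qed
      also have "\<dots> = mpow T A j a b - mpow T A i a b" using ij by simp
      also have "\<dots> = 0" using fun_cong[OF ij(4), of "(a, b)"] by (simp add: rp_def)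
      finally show "(\<Sum>k\<le>M. c k * mpow T A k a b) = 0" .
    qed
  qed
  then obtain c where c: "\<exists>k\<le>M. c k \<noteq> 0" "\<forall>a b. (\<Sum>k\<le>M. c k * mpow T A k a b) = 0" by blast
  define f where "f = (\<Sum>k\<le>M. monom (c k) k)"
  have "f \<noteq> 0"
  proof
    assume "f = 0"
    then have "coeff f k = 0" for k by simp
    with c(1) show False unfolding f_def coeff_sum_monom by (metis)
  qed
  moreover have "evalm T A f = (\<lambda>x y. 0)"
    using c(2) by (simp add: fun_eq_iff f_def evalm_sum_monom)
  ultimately show ?thesis by blast
qed

lemma interp:
  fixes h :: "real \<Rightarrow> real"
  assumes "finite F"
  shows "\<exists>q. \<forall>x\<in>F. poly q x = h x"
  using assms
proof (induction F rule: finite_induct)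
  case empty then show ?case by simp
next
  case (insert x F)
  then obtain q' where q': "\<forall>y\<in>F. poly q' y = h y" by blast
  define w where "w = (\<Prod>y\<in>F. [:-y, 1:])"
  have pw: "poly w z = (\<Prod>y\<in>F. z - y)" for z by (simp add: w_def poly_prod)
  have wx: "poly w x \<noteq> 0" using insert(1,2) by (auto simp: pw)
  have wy: "poly w y = 0" if "y \<in> F" for y using insert(1) that by (auto simp: pw)
  define q where "q = q' + smult ((h x - poly q' x) / poly w x) w"
  show ?case
  proof (intro exI[of _ q] ballI)
    fix z assume "z \<in> insert x F"
    then show "poly q z = h z"
      using wx wy q' by (auto simp: q_def)
  qed
qed

lemma prod_dvd:
  fixes g :: "complex poly"
  assumes "finite R" "\<forall>\<mu>\<in>R. poly g \<mu> = 0"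
  shows "(\<Prod>\<mu>\<in>R. [:-\<mu>, 1:]) dvd g"
  using assms
proof (induction R arbitrary: g rule: finite_induct)
  case empty then show ?case by simp
next
  case (insert \<mu> F)
  have "poly g \<mu> = 0" using insert.prems by simp
  then obtain g1 where g: "g = [:-\<mu>, 1:] * g1" by (metis poly_eq_0_iff_dvd dvdE)
  have "\<forall>\<nu>\<in>F. poly g1 \<nu> = 0"
  proof
    fix \<nu> assume "\<nu> \<in> F"
    then have "\<nu> \<noteq> \<mu>" "poly g \<nu> = 0" using insert by auto
    then show "poly g1 \<nu> = 0" by (simp add: g)
  qed
  from insert.IH[OF this] have "(\<Prod>\<mu>\<in>F. [:-\<mu>, 1:]) dvd g1" .
  moreover have "(\<Prod>\<mu>\<in>insert \<mu> F. [:-\<mu>, 1:]) = [:-\<mu>, 1:] * (\<Prod>\<mu>\<in>F. [:-\<mu>, 1:])"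
    by (rule prod.insert[OF insert(1,2)])
  ultimately show ?case unfolding g by (simp only: mult_dvd_mono[OF dvd_refl])
qed

lemma poly_map_of_real: "poly (map_poly of_real p) (of_real x) = (of_real (poly p x) :: complex)"
  by (induction p) (auto simp: map_poly_pCons)

lemma sqrt_exists:
  fixes A :: "'t \<Rightarrow> 't \<Rightarrow> complex"
  assumes fin: "finite T" and supp: "msupp T A" and herm: "mherm A" and psd: "psdT T A"
  shows "\<exists>p. (\<forall>k. coeff p k \<in> \<real>) \<and> mmul T (evalm T A p) (evalm T A p) = A"
proof -
  obtain f where f: "f \<noteq> 0" "evalm T A f = (\<lambda>x y. 0)" using annih[OF fin] by blast
  then have "evalm T A (f * 1) = (\<lambda>x y. 0)" by simp
  from reduce[OF fin supp herm psd f(1) this] obtain S where S: "finite S" "S \<subseteq> {\<mu>. 0 \<le> \<mu>}"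
    "evalm T A (\<Prod>\<mu>\<in>S. [:-\<mu>, 1:]) = (\<lambda>x y. 0)" by auto
  obtain q where q: "\<forall>x\<in>Re ` S. poly q x = sqrt x" using interp[of "Re ` S" sqrt] S(1) by blast
  define p where "p = map_poly (of_real :: real \<Rightarrow> complex) q"
  have cp: "coeff p k \<in> \<real>" for k by (simp add: p_def coeff_map_poly)
  have "\<forall>\<mu>\<in>S. poly (p * p - [:0, 1:]) \<mu> = 0"
  proof
    fix \<mu> assume "\<mu> \<in> S"
    then have mu: "Im \<mu> = 0" "Re \<mu> \<ge> 0" "poly q (Re \<mu>) = sqrt (Re \<mu>)"
      using S(2) q by (auto simp: less_eq_complex_def)
    then have me: "\<mu> = of_real (Re \<mu>)" by (simp add: complex_eq_iff)
    have "poly p \<mu> = of_real (sqrt (Re \<mu>))"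
      by (subst me) (simp add: p_def poly_map_of_real mu(3))
    have ss: "sqrt (Re \<mu>) * sqrt (Re \<mu>) = Re \<mu>" using mu(2) by simp
    have "poly (p * p) \<mu> = of_real (sqrt (Re \<mu>)) * of_real (sqrt (Re \<mu>))"
      using \<open>poly p \<mu> = of_real (sqrt (Re \<mu>))\<close> by simp
    also have "\<dots> = of_real (Re \<mu>)" by (simp only: of_real_mult[symmetric] ss)
    also have "\<dots> = \<mu>" using me by simp
    finally show "poly (p * p - [:0, 1:]) \<mu> = 0" by simp
  qed
  from prod_dvd[OF S(1) this] obtain k where k: "p * p - [:0, 1:] = (\<Prod>\<mu>\<in>S. [:-\<mu>, 1:]) * k"
    by (elim dvdE)
  then have pp: "p * p = [:0, 1:] + (\<Prod>\<mu>\<in>S. [:-\<mu>, 1:]) * k" by (simp add: algebra_simps)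
  have e1: "evalm T A [:0, 1:] = A"
    using mmul_one_right[OF fin supp] by (simp add: evalm_shift evalm_const)
  have "mmul T (evalm T A p) (evalm T A p) = evalm T A (p * p)" by (simp add: evalm_mult[OF fin])
  also have "\<dots> = A"
    unfolding pp evalm_add e1 evalm_mult[OF fin] S(3) mmul_zero_left by simp
  finally show ?thesis using cp by blast
qed



lemma sum_single:
  assumes "finite T" "a \<in> T" "\<forall>x\<in>T. x \<noteq> a \<longrightarrow> g x = 0"
  shows "(\<Sum>x\<in>T. g x) = g a"
proof -
  have "(\<Sum>x\<in>T. g x) = (\<Sum>x\<in>{a}. g x)"
    by (rule sum.mono_neutral_right) (use assms in auto)
  then show ?thesis by simp
qed

lemma sum_two:
  assumes "finite T" "a \<in> T" "b \<in> T" "a \<noteq> b" "\<forall>x\<in>T. x \<noteq> a \<and> x \<noteq> b \<longrightarrow> g x = 0"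
  shows "(\<Sum>x\<in>T. g x) = g a + g b"
proof -
  have "(\<Sum>x\<in>T. g x) = (\<Sum>x\<in>{a, b}. g x)"
    by (rule sum.mono_neutral_right) (use assms in auto)
  then show ?thesis using assms(4) by simp
qed

lemma Q_two:
  fixes \<alpha> \<beta> :: complex and A :: "'t \<Rightarrow> 't \<Rightarrow> complex"
  assumes fin: "finite T" and ab: "a \<in> T" "b \<in> T" "a \<noteq> b"
  defines "v \<equiv> (\<lambda>x. if x = a then \<alpha> else if x = b then \<beta> else 0)"
  shows "(\<Sum>x\<in>T. \<Sum>y\<in>T. cnj (v x) * A x y * v y) =
    cnj \<alpha> * A a a * \<alpha> + cnj \<alpha> * A a b * \<beta> + cnj \<beta> * A b a * \<alpha> + cnj \<beta> * A b b * \<beta>"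
proof -
  have inner: "(\<Sum>y\<in>T. cnj (v x) * A x y * v y) = cnj (v x) * A x a * \<alpha> + cnj (v x) * A x b * \<beta>" for x
    by (subst sum_two[OF fin ab]) (use ab(3) in \<open>auto simp: v_def\<close>)
  have "(\<Sum>x\<in>T. \<Sum>y\<in>T. cnj (v x) * A x y * v y) = (\<Sum>x\<in>T. cnj (v x) * A x a * \<alpha> + cnj (v x) * A x b * \<beta>)"
    by (simp only: inner)
  also have "\<dots> = (cnj \<alpha> * A a a * \<alpha> + cnj \<alpha> * A a b * \<beta>) + (cnj \<beta> * A b a * \<alpha> + cnj \<beta> * A b b * \<beta>)"
    by (subst sum_two[OF fin ab]) (use ab(3) in \<open>auto simp: v_def\<close>)
  finally show ?thesis by simp
qed

lemma Q_one:
  fixes A :: "'t \<Rightarrow> 't \<Rightarrow> complex"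
  assumes fin: "finite T" and a: "a \<in> T"
  defines "v \<equiv> (\<lambda>x. if x = a then 1 else 0)"
  shows "(\<Sum>x\<in>T. \<Sum>y\<in>T. cnj (v x) * A x y * v y) = A a a"
proof -
  have inner: "(\<Sum>y\<in>T. cnj (v x) * A x y * v y) = cnj (v x) * A x a" for x
    by (subst sum_single[OF fin a]) (auto simp: v_def)
  show ?thesis
    by (simp only: inner, subst sum_single[OF fin a]) (auto simp: v_def)
qed

lemma psd_herm:
  assumes fin: "finite T" and psd: "psdT T A" and supp: "msupp T A"
  shows "mherm A"
  unfolding mherm_def
proof (intro allI)
  fix a b
  have re: "Im (\<Sum>x\<in>T. \<Sum>y\<in>T. cnj (v x) * A x y * v y) = 0" for v
    using psd unfolding psdT_def less_eq_complex_def by simp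
  have diag: "Im (A c c) = 0" if "c \<in> T" for c
    using re[of "\<lambda>x. if x = c then 1 else 0"] Q_one[OF fin that, of A] by simp
  show "A a b = cnj (A b a)"
  proof (cases "a \<in> T \<and> b \<in> T")
    case False then show ?thesis using supp by (auto simp: msupp_def)
  next
    case True
    show ?thesis
    proof (cases "a = b")
      case True
      then show ?thesis using diag \<open>a \<in> T \<and> b \<in> T\<close> by (simp add: complex_eq_iff)
    next
      case False
      have ab: "a \<in> T" "b \<in> T" "a \<noteq> b" using True False by auto
      have "Im (A a a + A a b + A b a + A b b) = 0"
        using re[of "\<lambda>x. if x = a then 1 else if x = b then 1 else 0"] Q_two[OF fin ab, of 1 1 A] by simp
      then have i1: "Im (A a b) + Im (A b a) = 0" using diag ab by simp
      have "Im (cnj 1 * A a a * 1 + cnj 1 * A a b * \<i> + cnj \<i> * A b a * 1 + cnj \<i> * A b b * \<i>) = 0"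
        using re[of "\<lambda>x. if x = a then 1 else if x = b then \<i> else 0"]
        by (simp only: Q_two[OF fin ab])
      then have i2: "Re (A a b) - Re (A b a) = 0" using diag ab by simp
      show ?thesis using i1 i2 by (simp add: complex_eq_iff)
    qed
  qed
qed



lemma perm_tuple_in:
  assumes ga: "group_action G {..n} \<phi>" and oc: "orbit_const G \<phi> n d"
    and g: "g \<in> carrier G" and a: "a \<in> tuples n d"
  shows "perm_tuple n \<phi> g a \<in> tuples n d"
  unfolding perm_tuple_def tuples_def restrict_PiE_iff
proof
  fix k assume k: "k \<in> {..n}"
  have gk: "\<phi> g k \<in> {..n}" using group_action.element_image[OF ga g k refl] .
  have "a (\<phi> g k) < d (\<phi> g k)" using a gk unfolding tuples_def by (auto simp: PiE_iff)
  moreover have "d (\<phi> g k) = d k" using oc g k unfolding orbit_const_def by auto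
  ultimately show "a (\<phi> g k) \<in> {..<d k}" by simp
qed

lemma perm_tuple_comp:
  assumes ga: "group_action G {..n} \<phi>" and g: "g \<in> carrier G" and h: "h \<in> carrier G"
  shows "perm_tuple n \<phi> g (perm_tuple n \<phi> h a) = perm_tuple n \<phi> (h \<otimes>\<^bsub>G\<^esub> g) a"
  unfolding perm_tuple_def
proof (rule restrict_ext)
  fix k assume k: "k \<in> {..n}"
  have gk: "\<phi> g k \<in> {..n}" using group_action.element_image[OF ga g k refl] .
  show "restrict (\<lambda>k. a (\<phi> h k)) {..n} (\<phi> g k) = a (\<phi> (h \<otimes>\<^bsub>G\<^esub> g) k)"
    using gk group_action.composition_rule[OF ga k h g] by simp
qed

lemma perm_tuple_one:
  assumes ga: "group_action G {..n} \<phi>" and a: "a \<in> tuples n d"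
  shows "perm_tuple n \<phi> \<one>\<^bsub>G\<^esub> a = a"
proof -
  have "perm_tuple n \<phi> \<one>\<^bsub>G\<^esub> a = restrict a {..n}"
    unfolding perm_tuple_def
  proof (rule restrict_ext)
    fix k assume k: "k \<in> {..n}"
    have "\<phi> \<one>\<^bsub>G\<^esub> k = k"
      using group_action.id_eq_one[OF ga] k by (metis restrict_apply')
    then show "a (\<phi> \<one>\<^bsub>G\<^esub> k) = a k" by simp
  qed
  also have "\<dots> = a" using a unfolding tuples_def by simp
  finally show ?thesis .
qed

lemma perm_tuple_bij:
  assumes ga: "group_action G {..n} \<phi>" and oc: "orbit_const G \<phi> n d" and g: "g \<in> carrier G"
  shows "bij_betw (perm_tuple n \<phi> g) (tuples n d) (tuples n d)"
proof -
  have grp: "group G" using ga unfolding group_action_def group_hom_def group_hom_axioms_def by simp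
  have ig: "inv\<^bsub>G\<^esub> g \<in> carrier G" using group.inv_closed[OF grp g] .
  show ?thesis
  proof (rule bij_betw_byWitness[where f' = "perm_tuple n \<phi> (inv\<^bsub>G\<^esub> g)"])
    show "\<forall>a\<in>tuples n d. perm_tuple n \<phi> (inv\<^bsub>G\<^esub> g) (perm_tuple n \<phi> g a) = a"
      using perm_tuple_comp[OF ga ig g] perm_tuple_one[OF ga] group.r_inv[OF grp g] by simp
    show "\<forall>a\<in>tuples n d. perm_tuple n \<phi> g (perm_tuple n \<phi> (inv\<^bsub>G\<^esub> g) a) = a"
      using perm_tuple_comp[OF ga g ig] perm_tuple_one[OF ga] group.l_inv[OF grp g] by simp
    show "perm_tuple n \<phi> g ` tuples n d \<subseteq> tuples n d"
      using perm_tuple_in[OF ga oc g] by auto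
    show "perm_tuple n \<phi> (inv\<^bsub>G\<^esub> g) ` tuples n d \<subseteq> tuples n d"
      using perm_tuple_in[OF ga oc ig] by auto
  qed
qed

theorem theorem3p20:
  fixes n :: nat and \<Omega> :: "nat set \<Rightarrow> nat" and G :: "('g, 'b) monoid_scheme"
    and \<phi> :: "'g \<Rightarrow> nat \<Rightarrow> nat" and \<psi> :: "'g \<Rightarrow> nat set \<times> nat \<Rightarrow> nat set \<times> nat"
    and d :: "nat \<Rightarrow> nat"
  assumes "wsc n \<Omega>"
    and "wsc_action n \<Omega> G \<phi> \<psi>"
    and "orbit_const G \<phi> n d"
    and "\<forall>\<xi>. G_invariant n G \<phi> d d \<xi> \<longrightarrow> omega_rank n \<Omega> G \<phi> \<psi> d d \<xi> < \<infinity>"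
  shows "\<forall>\<sigma>. psd n d \<sigma> \<and> G_invariant n G \<phi> d d \<sigma> \<longrightarrow> puri_rank n \<Omega> G \<phi> \<psi> d \<sigma> < \<infinity>"
proof (intro allI impI)
  fix \<sigma> assume prem: "psd n d \<sigma> \<and> G_invariant n G \<phi> d d \<sigma>"
  have ga: "group_action G {..n} \<phi>" using assms(2) unfolding wsc_action_def by simp
  have oc: "orbit_const G \<phi> n d" by (rule assms(3))
  define T where "T = tuples n d"
  have fin: "finite T" unfolding T_def tuples_def by (simp add: finite_PiE)
  define A where "A = (\<lambda>a b. if a \<in> T \<and> b \<in> T then \<sigma> a b else 0)"
  have supp: "msupp T A" by (simp add: msupp_def A_def)
  have psdA: "psdT T A"
    unfolding psdT_def
  proof
    fix v :: "(nat \<Rightarrow> nat) \<Rightarrow> complex"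
    have "(\<Sum>a\<in>T. \<Sum>b\<in>T. cnj (v a) * A a b * v b) = (\<Sum>a\<in>T. \<Sum>b\<in>T. cnj (v a) * \<sigma> a b * v b)"
      by (simp add: A_def)
    also have "0 \<le> \<dots>" using prem unfolding psd_def T_def by blast
    finally show "0 \<le> (\<Sum>a\<in>T. \<Sum>b\<in>T. cnj (v a) * A a b * v b)" by simp
  qed
  have herm: "mherm A" by (rule psd_herm[OF fin psdA supp])
  obtain p where p: "\<forall>k. coeff p k \<in> \<real>" "mmul T (evalm T A p) (evalm T A p) = A"
    using sqrt_exists[OF fin supp herm psdA] by blast
  define X where "X = evalm T A p"
  have hX: "mherm X" unfolding X_def by (rule mherm_evalm[OF fin supp herm p(1)])
  have invX: "G_invariant n G \<phi> d d X"
    unfolding G_invariant_def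
  proof (intro ballI)
    fix g a b assume g: "g \<in> carrier G" and a: "a \<in> tuples n d" and b: "b \<in> tuples n d"
    have bij: "bij_betw (perm_tuple n \<phi> g) T T" unfolding T_def by (rule perm_tuple_bij[OF ga oc g])
    have "minv T (perm_tuple n \<phi> g) A"
      unfolding minv_def A_def
    proof (intro ballI)
      fix a b assume "a \<in> T" "b \<in> T"
      then show "(if perm_tuple n \<phi> g a \<in> T \<and> perm_tuple n \<phi> g b \<in> T then \<sigma> (perm_tuple n \<phi> g a) (perm_tuple n \<phi> g b) else 0) =
          (if a \<in> T \<and> b \<in> T then \<sigma> a b else 0)"
        using prem g bij_betwE[OF bij] unfolding G_invariant_def T_def by auto
    qed
    from minv_evalm[OF bij this, of p] a b show "X (perm_tuple n \<phi> g a) (perm_tuple n \<phi> g b) = X a b"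
      unfolding minv_def X_def T_def by blast
  qed
  have pur: "is_purification n \<Omega> G \<phi> \<psi> d \<sigma> d X"
    unfolding is_purification_def
  proof (intro conjI ballI)
    show "orbit_const G \<phi> n d" by (rule oc)
  next
    fix a b assume a: "a \<in> tuples n d" and b: "b \<in> tuples n d"
    have "adj_mult n d X a b = (\<Sum>c\<in>T. X a c * X c b)"
      unfolding adj_mult_def T_def using hX unfolding mherm_def by (metis complex_cnj_cnj)
    also have "\<dots> = mmul T X X a b" using a b by (simp add: mmul_def T_def)
    also have "\<dots> = \<sigma> a b" using p(2) a b by (simp add: X_def A_def T_def)
    finally show "\<sigma> a b = adj_mult n d X a b" by simp
  next
    show "omega_rank n \<Omega> G \<phi> \<psi> d d X < \<infinity>" using assms(4) invX by blast
  qed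
  have "puri_rank n \<Omega> G \<phi> \<psi> d \<sigma> \<le> omega_rank n \<Omega> G \<phi> \<psi> d d X"
    unfolding puri_rank_def by (rule INF_lower2[of "(d, X)"]) (use pur in auto)
  also have "\<dots> < \<infinity>" using assms(4) invX by blast
  finally show "puri_rank n \<Omega> G \<phi> \<psi> d \<sigma> < \<infinity>" .
qed


end
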